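(* Let $i\in\{1,2,3\}$ and let $v:(t_0,t_1)\times\mathbb T^3\to\mathbb R^3$, together with $L$, be a (sufficiently regular) solution of the system \[ \begin{aligned} \partial_t v^i&=-\frac{\alpha(1-3K)}{t}v^i - \frac{K}{1+K}t^{-\alpha}(1-|v|^2)\partial_i L-t^{-\alpha}v^j\partial_j v^i +t^{-\alpha}\Big(1-\frac{1-K}{1-K|v|^2}\Big)v^i\partial_j v^j\\ &\quad+t^{-\alpha}\frac{1-K}{1+K}\Big(1-\frac{1-K}{1-K|v|^2}\Big)v^i v^j\partial_j L +\frac{\alpha(1-3K)}{t}\frac{1-K}{1-K|v|^2}|v|^2 v^i,\\ \partial_tL&=-t^{-\alpha}\frac{1+K}{1-K|v|^2}\partial_j v^j-t^{-\alpha}\frac{1-K}{1-K|v|^2} v^j\partial_j L+\frac{\alpha(1+K)}{t}\frac{1-3K}{1-K|v|^2}|v|^2 . \end{aligned} \] Then the mean velocity $\overline v^i(t)=\int_{\mathbb T^3}v^i(t,x)\,d^3x$ satisfies \[ \partial_t\overline v^i=-\frac{\alpha(1-3K)}{t}\overline v^i+g^i(t), \] where \[ |g(t)|\leq C\frac{1+t^{1-\alpha}}{t}\, p\big(\overline v^j,\|D v\|_{H^1},\|D v\|_{L^{\infty}},\|D L\|_{L^2}\big) \] for a constant $C$ and a polynomial $p$ all of whose terms have degree at least two (i.e.\ vanishing zeroth and first order parts).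
   Context: Standing assumptions: $\alpha>0$ and $0\le K\le 1/3$ are constants, $t>1$, and $|v|<1/10$. $\mathbb T^3$ is the standard flat 3-torus, indices are raised/lowered with $\delta$, repeated indices summed, $|v|^2=\delta_{ij}v^iv^j$. $D$ denotes the spatial gradient and $\|f\|_{H^r}^2=\sum_{n=0}^r\int_{\mathbb T^3}|D^nf|^2$. The system is the relativistic Euler equations with $p=K\rho$ on the metric $-dt^2+t^{2\alpha}\delta$ written in variables $v^i=t^\alpha u^i/\sqrt{1+t^{2\alpha}|u|^2}$, $L=\log(t^{3\alpha(1+K)}\rho)$. *)

theory Defs
  imports "HOL-Analysis.Analysis"
begin

fun Ck_on :: "nat \<Rightarrow> 'a::euclidean_space set \<Rightarrow> ('a \<Rightarrow> real) \<Rightarrow> bool" where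
  "Ck_on 0 S f = continuous_on S f"
| "Ck_on (Suc k) S f =
     (continuous_on S f \<and> (\<forall>x\<in>S. f differentiable (at x)) \<and>
      (\<forall>b\<in>Basis. Ck_on k S (\<lambda>x. frechet_derivative f (at x) b)))"

text \<open>Spatial partial derivative d/dx^j on R^3 (the torus is realised as
  1-periodic functions on R^3).\<close>
definition pdx :: "3 \<Rightarrow> (real^3 \<Rightarrow> real) \<Rightarrow> real^3 \<Rightarrow> real" where
  "pdx j f x = frechet_derivative f (at x) (axis j 1)"

text \<open>Fundamental domain of the standard flat torus R^3/Z^3 (volume 1).\<close>
definition torus_cell :: "(real^3) set" where
  "torus_cell = cbox 0 One"

definition periodic3 :: "(real^3 \<Rightarrow> 'b) \<Rightarrow> bool" where
  "periodic3 f \<longleftrightarrow> (\<forall>x k. f (x + axis k 1) = f x)"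

definition euler_rhs_v ::
  "real \<Rightarrow> real \<Rightarrow> real \<Rightarrow> (real^3 \<Rightarrow> real^3) \<Rightarrow> (real^3 \<Rightarrow> real) \<Rightarrow> real^3 \<Rightarrow> 3 \<Rightarrow> real" where
  "euler_rhs_v \<alpha> K t w l x i =
     (let n2 = (norm (w x))\<^sup>2;
          Q = (1 - K) / (1 - K * n2);
          dv = (\<Sum>j\<in>UNIV. pdx j (\<lambda>y. w y $ j) x)
      in - (\<alpha> * (1 - 3*K) / t) * (w x $ i)
         - K / (1 + K) * t powr (-\<alpha>) * (1 - n2) * pdx i l x
         - t powr (-\<alpha>) * (\<Sum>j\<in>UNIV. w x $ j * pdx j (\<lambda>y. w y $ i) x)
         + t powr (-\<alpha>) * (1 - Q) * (w x $ i) * dv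
         + t powr (-\<alpha>) * ((1 - K) / (1 + K)) * (1 - Q) * (w x $ i)
             * (\<Sum>j\<in>UNIV. w x $ j * pdx j l x)
         + (\<alpha> * (1 - 3*K) / t) * Q * n2 * (w x $ i))"

definition euler_rhs_L ::
  "real \<Rightarrow> real \<Rightarrow> real \<Rightarrow> (real^3 \<Rightarrow> real^3) \<Rightarrow> (real^3 \<Rightarrow> real) \<Rightarrow> real^3 \<Rightarrow> real" where
  "euler_rhs_L \<alpha> K t w l x =
     (let n2 = (norm (w x))\<^sup>2;
          dv = (\<Sum>j\<in>UNIV. pdx j (\<lambda>y. w y $ j) x)
      in - ((t powr (-\<alpha>)) * ((1 + K) / (1 - K * n2)) * dv)
         - (t powr (-\<alpha>)) * ((1 - K) / (1 - K * n2)) * (\<Sum>j\<in>UNIV. w x $ j * pdx j l x)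
         + (\<alpha> * (1 + K) / t) * ((1 - 3*K) / (1 - K * n2)) * n2)"

text \<open>(v, L) is a (C^2, spatially 1-periodic) solution of the system on (t0,t1) x T^3,
  satisfying the standing assumption |v| < 1/10.\<close>
definition euler_solution ::
  "real \<Rightarrow> real \<Rightarrow> real \<Rightarrow> real \<Rightarrow> (real \<Rightarrow> real^3 \<Rightarrow> real^3) \<Rightarrow> (real \<Rightarrow> real^3 \<Rightarrow> real) \<Rightarrow> bool" where
  "euler_solution \<alpha> K t0 t1 v L \<longleftrightarrow>
     (\<forall>i. Ck_on 2 ({t0<..<t1} \<times> UNIV) (\<lambda>p. v (fst p) (snd p) $ i)) \<and>
     Ck_on 2 ({t0<..<t1} \<times> UNIV) (\<lambda>p. L (fst p) (snd p)) \<and>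
     (\<forall>t\<in>{t0<..<t1}. periodic3 (v t) \<and> periodic3 (L t)) \<and>
     (\<forall>t\<in>{t0<..<t1}. \<forall>x. norm (v t x) < 1/10) \<and>
     (\<forall>t\<in>{t0<..<t1}. \<forall>x. \<forall>i.
        vector_derivative (\<lambda>s. v s x $ i) (at t) = euler_rhs_v \<alpha> K t (v t) (L t) x i) \<and>
     (\<forall>t\<in>{t0<..<t1}. \<forall>x.
        vector_derivative (\<lambda>s. L s x) (at t) = euler_rhs_L \<alpha> K t (v t) (L t) x)"

text \<open>Mean over T^3 (volume 1).\<close>
definition mean3 :: "(real^3 \<Rightarrow> real^3) \<Rightarrow> real^3" where
  "mean3 w = integral torus_cell w"

definition Dv_sq :: "(real^3 \<Rightarrow> real^3) \<Rightarrow> real^3 \<Rightarrow> real" where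
  "Dv_sq w x = (\<Sum>i\<in>UNIV. \<Sum>j\<in>UNIV. (pdx j (\<lambda>y. w y $ i) x)\<^sup>2)"

definition D2v_sq :: "(real^3 \<Rightarrow> real^3) \<Rightarrow> real^3 \<Rightarrow> real" where
  "D2v_sq w x = (\<Sum>i\<in>UNIV. \<Sum>j\<in>UNIV. \<Sum>k\<in>UNIV.
                   (pdx k (pdx j (\<lambda>y. w y $ i)) x)\<^sup>2)"

definition Dv_H1 :: "(real^3 \<Rightarrow> real^3) \<Rightarrow> real" where
  "Dv_H1 w = sqrt (integral torus_cell (Dv_sq w) + integral torus_cell (D2v_sq w))"

definition Dv_Linf :: "(real^3 \<Rightarrow> real^3) \<Rightarrow> real" where
  "Dv_Linf w = (SUP x\<in>torus_cell. sqrt (Dv_sq w x))"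

definition DL_L2 :: "(real^3 \<Rightarrow> real) \<Rightarrow> real" where
  "DL_L2 l = sqrt (integral torus_cell (\<lambda>x. \<Sum>j\<in>UNIV. (pdx j l x)\<^sup>2))"

definition poly_deg_ge2 :: "nat \<Rightarrow> ((nat \<Rightarrow> real) \<Rightarrow> real) \<Rightarrow> bool" where
  "poly_deg_ge2 n p \<longleftrightarrow>
     (\<exists>(M :: (nat \<Rightarrow> nat) set) (c :: (nat \<Rightarrow> nat) \<Rightarrow> real).
        finite M \<and> (\<forall>m\<in>M. (\<forall>k\<ge>n. m k = 0) \<and> 2 \<le> (\<Sum>k<n. m k)) \<and>
        (\<forall>y. p y = (\<Sum>m\<in>M. c m * (\<Prod>k<n. y k ^ m k))))"

end

theory Submission
  imports Defs
begin


lemma slice_facts: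
  fixes F :: "real \<times> (real^3) \<Rightarrow> real"
  assumes ck: "Ck_on 2 (U \<times> UNIV) F" and U: "open U" and t: "t \<in> U"
  shows slice_cont: "continuous_on UNIV (\<lambda>x. F (t,x))"
  and slice_der: "\<And>x. ((\<lambda>y. F(t,y)) has_derivative (\<lambda>h. frechet_derivative F (at (t,x)) (0,h))) (at x)"
  and slice_pdx: "\<And>j x. pdx j (\<lambda>y. F(t,y)) x = frechet_derivative F (at (t,x)) (0, axis j 1)"
  and slice_pdx_cont: "\<And>j. continuous_on UNIV (\<lambda>x. pdx j (\<lambda>y. F(t,y)) x)"
  and time_der: "\<And>x s. s\<in>U \<Longrightarrow> ((\<lambda>s. F(s,x)) has_field_derivative frechet_derivative F (at (s,x)) (1,0)) (at s)"
  and time_cont: "continuous_on (U \<times> UNIV) (\<lambda>p. frechet_derivative F (at p) (1,0))"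
proof -
  have ck': "continuous_on (U \<times> UNIV) F" "\<And>p. p \<in> U \<times> UNIV \<Longrightarrow> F differentiable (at p)"
    "\<And>b. b \<in> Basis \<Longrightarrow> continuous_on (U \<times> UNIV) (\<lambda>p. frechet_derivative F (at p) b)"
    using ck by (auto simp: numeral_2_eq_2)
  have b1: "((1::real), (0::real^3)) \<in> Basis" by (simp add: Basis_prod_def)
  have b2: "((0::real), axis j (1::real)) \<in> Basis" for j :: 3
    by (auto simp add: Basis_prod_def Basis_vec_def)
  show "continuous_on UNIV (\<lambda>x. F (t,x))"
    by (rule continuous_on_compose2[OF ck'(1)]) (auto intro!: continuous_intros simp: t)
  show sd: "((\<lambda>y. F(t,y)) has_derivative (\<lambda>h. frechet_derivative F (at (t,x)) (0,h))) (at x)" for x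
  proof -
    have "((\<lambda>y. (t,y)) has_derivative (\<lambda>h. (0,h))) (at x)"
      by (auto intro!: derivative_eq_intros)
    moreover have "(F has_derivative frechet_derivative F (at (t,x))) (at (t,x))"
      using ck'(2)[of "(t,x)"] t frechet_derivative_works by auto
    ultimately show ?thesis using diff_chain_at by (fastforce simp: o_def)
  qed
  show sp: "pdx j (\<lambda>y. F(t,y)) x = frechet_derivative F (at (t,x)) (0, axis j 1)" for j x
    unfolding pdx_def using frechet_derivative_at[OF sd[of x]] by metis
  show "continuous_on UNIV (\<lambda>x. pdx j (\<lambda>y. F(t,y)) x)" for j
    unfolding sp
    by (rule continuous_on_compose2[OF ck'(3)[OF b2]]) (auto intro!: continuous_intros simp: t)
  show "((\<lambda>s. F(s,x)) has_field_derivative frechet_derivative F (at (s,x)) (1,0)) (at s)" if s: "s \<in> U" for x s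
  proof -
    have "((\<lambda>s. (s,x)) has_derivative (\<lambda>h. (h,0))) (at s)"
      by (auto intro!: derivative_eq_intros)
    moreover have d: "(F has_derivative frechet_derivative F (at (s,x))) (at (s,x))"
      using ck'(2)[of "(s,x)"] s frechet_derivative_works by auto
    ultimately have "((\<lambda>s. F(s,x)) has_derivative (\<lambda>h. frechet_derivative F (at (s,x)) (h,0))) (at s)"
      using diff_chain_at by (fastforce simp: o_def)
    moreover have "(\<lambda>h. frechet_derivative F (at (s,x)) (h,0)) = (*) (frechet_derivative F (at (s,x)) (1,0))"
    proof
      fix h :: real
      have "frechet_derivative F (at (s,x)) (h,0) = frechet_derivative F (at (s,x)) (h *\<^sub>R (1,0))" by simp
      also have "\<dots> = h *\<^sub>R frechet_derivative F (at (s,x)) (1,0)"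
        by (rule linear_scale[OF bounded_linear.linear[OF has_derivative_bounded_linear[OF d]]])
      finally show "frechet_derivative F (at (s,x)) (h,0) = frechet_derivative F (at (s,x)) (1,0) * h" by simp
    qed
    ultimately show ?thesis by (simp add: has_field_derivative_def)
  qed
  show "continuous_on (U \<times> UNIV) (\<lambda>p. frechet_derivative F (at p) (1,0))"
    using ck'(3)[OF b1] .
qed



lemma integral_shift_cbox:
  fixes f :: "real^3 \<Rightarrow> real"
  assumes "continuous_on UNIV f"
  shows "integral (cbox (a+c) (b+c)) f = integral (cbox a b) (\<lambda>x. f (c + x))"
proof -
  have "(f has_integral integral (cbox (a+c) (b+c)) f) (cbox (a+c) (b+c))"
    using integrable_continuous[OF continuous_on_subset[OF assms]] by auto
  then have "((f \<circ> (+) c) has_integral integral (cbox (a+c) (b+c)) f) (cbox a b)"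
    using has_integral_shift_cbox_iff by blast
  then show ?thesis by (simp add: integral_unique o_def)
qed

lemma mean_pdx_zero:
  fixes l :: "real^3 \<Rightarrow> real"
  assumes cont: "continuous_on UNIV l"
    and der: "\<And>x. (l has_derivative frechet_derivative l (at x)) (at x)"
    and pc: "continuous_on UNIV (pdx i l)"
    and per: "periodic3 l"
  shows "integral torus_cell (pdx i l) = 0"
proof -
  define e :: "real^3" where "e = axis i 1"
  have eB: "e \<in> Basis" by (auto simp: e_def Basis_vec_def)
  have ie: "x \<bullet> e = x $ i" for x :: "real^3" by (simp add: e_def inner_axis)
  have eij: "e $ j = (if j = i then 1 else 0)" for j by (simp add: e_def axis_def)
  have one0: "(One::real^3) $ j = 1" for j by (metis Cart_1 one_index)
  have one: "(\<Sum>x\<in>Basis. (x::real^3) $ j) = 1" for j using one0[of j] by simp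
  have pere: "l (x + e) = l x" for x using per by (simp add: periodic3_def e_def)
  have intc: "l integrable_on cbox a b" for a b
    using integrable_continuous[OF continuous_on_subset[OF cont]] by auto
  define \<phi> where "\<phi> h = integral torus_cell (\<lambda>x. l (x + h *\<^sub>R e))" for h
  have allsplit: "(\<forall>j::3. P j) \<longleftrightarrow> P i \<and> (\<forall>j. j \<noteq> i \<longrightarrow> P j)" for P by auto
  have memC: "x \<in> torus_cell \<longleftrightarrow> (\<forall>j. 0 \<le> x$j \<and> x$j \<le> 1)" for x
    by (simp add: torus_cell_def mem_box_cart one)
  have step1: "\<phi> h = integral torus_cell l" if h: "0 \<le> h" "h \<le> 1" for h
  proof -
    define c :: "real^3" where "c = (\<chi> j. if j = i then h else 1)"
    have memS: "x \<in> cbox (0 + h *\<^sub>R e) (One + h *\<^sub>R e) \<longleftrightarrow>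
       h \<le> x$i \<and> x$i \<le> 1 + h \<and> (\<forall>j. j \<noteq> i \<longrightarrow> 0 \<le> x$j \<and> x$j \<le> 1)" for x
      by (subst mem_box_cart, subst allsplit) (simp add: eij one)
    have memE: "x \<in> cbox (0 + e) (c + e) \<longleftrightarrow>
       1 \<le> x$i \<and> x$i \<le> h + 1 \<and> (\<forall>j. j \<noteq> i \<longrightarrow> 0 \<le> x$j \<and> x$j \<le> 1)" for x
      by (subst mem_box_cart, subst allsplit) (simp add: eij c_def)
    have memc: "x \<in> cbox 0 c \<longleftrightarrow>
       0 \<le> x$i \<and> x$i \<le> h \<and> (\<forall>j. j \<noteq> i \<longrightarrow> 0 \<le> x$j \<and> x$j \<le> 1)" for x
      by (subst mem_box_cart, subst allsplit) (simp add: c_def)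
    have memC': "x \<in> torus_cell \<longleftrightarrow>
       0 \<le> x$i \<and> x$i \<le> 1 \<and> (\<forall>j. j \<noteq> i \<longrightarrow> 0 \<le> x$j \<and> x$j \<le> 1)" for x
      by (subst memC, subst allsplit) simp
    have "\<phi> h = integral (cbox 0 One) (\<lambda>x. l (h *\<^sub>R e + x))"
      by (simp add: \<phi>_def torus_cell_def add.commute)
    also have "\<dots> = integral (cbox (0 + h *\<^sub>R e) (One + h *\<^sub>R e)) l"
      by (rule integral_shift_cbox[OF cont, symmetric])
    also have "\<dots> = integral (cbox (0 + h *\<^sub>R e) (One + h *\<^sub>R e) \<inter> {x. x\<bullet>e \<le> 1}) l
         + integral (cbox (0 + h *\<^sub>R e) (One + h *\<^sub>R e) \<inter> {x. x\<bullet>e \<ge> 1}) l"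
      by (rule integral_split[OF intc eB])
    also have "cbox (0 + h *\<^sub>R e) (One + h *\<^sub>R e) \<inter> {x. x\<bullet>e \<le> 1} = torus_cell \<inter> {x. x\<bullet>e \<ge> h}"
      using h unfolding set_eq_iff Int_iff mem_Collect_eq memS memC' ie by auto
    also have "cbox (0 + h *\<^sub>R e) (One + h *\<^sub>R e) \<inter> {x. x\<bullet>e \<ge> 1} = cbox (0 + e) (c + e)"
      using h unfolding set_eq_iff Int_iff mem_Collect_eq memS memE ie by auto
    also have "integral (cbox (0 + e) (c + e)) l = integral (cbox 0 c) (\<lambda>x. l (e + x))"
      by (rule integral_shift_cbox[OF cont])
    also have "\<dots> = integral (cbox 0 c) l"
      using pere by (simp add: add.commute)
    also have "cbox 0 c = torus_cell \<inter> {x. x\<bullet>e \<le> h}"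
      using h unfolding set_eq_iff Int_iff mem_Collect_eq memc memC' ie by auto
    finally show ?thesis
      using integral_split[OF intc eB, of 0 One h] by (simp add: torus_cell_def)
  qed
  have step2: "\<phi> h = integral torus_cell l" if h: "-1 \<le> h" "h < 0" for h
  proof -
    have "l (x + h *\<^sub>R e) = l (x + (h+1) *\<^sub>R e)" for x
      using pere[of "x + h *\<^sub>R e"] by (simp add: algebra_simps)
    then have "\<phi> h = \<phi> (h+1)" by (simp add: \<phi>_def)
    then show ?thesis using step1[of "h+1"] h by simp
  qed
  have dd: "((\<lambda>h. l (x + h *\<^sub>R e)) has_field_derivative pdx i l (x + h *\<^sub>R e)) (at h within UNIV)" for x h
  proof -
    have g: "((\<lambda>h. x + h *\<^sub>R e) has_derivative (\<lambda>k. k *\<^sub>R e)) (at h)"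
      by (auto intro!: derivative_eq_intros)
    have "((\<lambda>h. l (x + h *\<^sub>R e)) has_derivative (\<lambda>k. frechet_derivative l (at (x + h *\<^sub>R e)) (k *\<^sub>R e))) (at h)"
      using diff_chain_at[OF g der] by (simp add: o_def)
    moreover have "(\<lambda>k. frechet_derivative l (at (x + h *\<^sub>R e)) (k *\<^sub>R e)) = (*) (pdx i l (x + h *\<^sub>R e))"
    proof
      fix k :: real
      show "frechet_derivative l (at (x + h *\<^sub>R e)) (k *\<^sub>R e) = pdx i l (x + h *\<^sub>R e) * k"
        using linear_scale[OF bounded_linear.linear[OF has_derivative_bounded_linear[OF der]]]
        by (simp add: pdx_def e_def)
    qed
    ultimately show ?thesis by (simp add: has_field_derivative_def)
  qed
  have "(\<phi> has_field_derivative integral (cbox 0 One) (\<lambda>x. pdx i l (x + 0 *\<^sub>R e))) (at 0 within UNIV)"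
    unfolding \<phi>_def torus_cell_def
  proof (rule leibniz_rule_field_derivative[OF dd])
    show "(\<lambda>x. l (x + h *\<^sub>R e)) integrable_on cbox 0 One" for h
      by (rule integrable_continuous) (auto intro!: continuous_on_compose2[OF cont] continuous_intros)
    show "continuous_on (UNIV \<times> cbox 0 One) (\<lambda>(h, x). pdx i l (x + h *\<^sub>R e))"
      by (auto intro!: continuous_on_compose2[OF pc] continuous_intros simp: split_beta)
  qed auto
  then have D: "(\<phi> has_field_derivative integral torus_cell (pdx i l)) (at 0)"
    by (simp add: torus_cell_def)
  show ?thesis
  proof (rule DERIV_local_const[OF D, of 1])
    show "\<forall>y. \<bar>0 - y\<bar> < 1 \<longrightarrow> \<phi> 0 = \<phi> y"
    proof (intro allI impI)
      fix y :: real assume "\<bar>0 - y\<bar> < 1"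
      then show "\<phi> 0 = \<phi> y"
        using step1[of 0] step1[of y] step2[of y] by (cases "y < 0") auto
    qed
  qed simp
qed



lemma content_cell: "Henstock_Kurzweil_Integration.content torus_cell = 1"
  by (simp add: torus_cell_def)

lemma one_vec3: "(\<Sum>x\<in>Basis. (x::real^3) $ j) = 1"
proof -
  have "(One::real^3) $ j = 1" by (metis Cart_1 one_index)
  then show ?thesis by simp
qed

lemma cell_mem: "x \<in> torus_cell \<longleftrightarrow> (\<forall>j. 0 \<le> x$j \<and> x$j \<le> 1)"
  by (simp add: torus_cell_def mem_box_cart one_vec3)

lemma deriv_expand:
  fixes f :: "real^3 \<Rightarrow> real"
  assumes der: "(f has_derivative f') (at x)"
  shows "f' h = (\<Sum>j\<in>UNIV. h $ j * pdx j f x)"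
proof -
  have lin: "linear f'" using has_derivative_linear[OF der] .
  have fd: "f' = frechet_derivative f (at x)" using frechet_derivative_at[OF der] .
  have "f' h = f' (\<Sum>j\<in>UNIV. h $ j *\<^sub>R axis j 1)"
    using basis_expansion[of h] by (simp add: scalar_mult_eq_scaleR)
  also have "\<dots> = (\<Sum>j\<in>UNIV. h $ j * f' (axis j 1))"
    by (simp add: linear_sum[OF lin] linear_scale[OF lin])
  finally show ?thesis by (simp add: pdx_def fd)
qed

lemma osc_bound:
  fixes f :: "real^3 \<Rightarrow> real"
  assumes der: "\<And>x. (f has_derivative frechet_derivative f (at x)) (at x)"
    and bnd: "\<And>x j. x \<in> torus_cell \<Longrightarrow> \<bar>pdx j f x\<bar> \<le> D"
    and cont: "continuous_on UNIV f"
    and x: "x \<in> torus_cell"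
  shows "\<bar>f x - integral torus_cell f\<bar> \<le> 9 * D"
proof -
  have D0: "0 \<le> D" using bnd[OF x, of 1] by simp
  have lip: "\<bar>f x - f y\<bar> \<le> 9 * D" if y: "y \<in> torus_cell" for y
  proof -
    have "norm (f x - f y) \<le> (3 * D) * norm (x - y)"
    proof (rule differentiable_bound[where f' = "\<lambda>z. frechet_derivative f (at z)"])
      show "convex torus_cell" by (simp add: torus_cell_def)
      show "(f has_derivative frechet_derivative f (at z)) (at z within torus_cell)" for z
        using der has_derivative_at_withinI by blast
      show "onorm (frechet_derivative f (at z)) \<le> 3 * D" if z: "z \<in> torus_cell" for z
      proof (rule onorm_le)
        fix h :: "real^3"
        have "\<bar>frechet_derivative f (at z) h\<bar> = \<bar>\<Sum>j\<in>UNIV. h $ j * pdx j f z\<bar>"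
          using deriv_expand[OF der] by simp
        also have "\<dots> \<le> (\<Sum>j\<in>UNIV. \<bar>h $ j * pdx j f z\<bar>)" by (rule sum_abs)
        also have "\<dots> \<le> (\<Sum>j\<in>(UNIV::3 set). norm h * D)"
        proof (rule sum_mono)
          fix j :: 3
          have "\<bar>h $ j * pdx j f z\<bar> = \<bar>h $ j\<bar> * \<bar>pdx j f z\<bar>" by (simp add: abs_mult)
          also have "\<dots> \<le> norm h * D"
            by (rule mult_mono) (auto simp: component_le_norm_cart bnd[OF z] D0)
          finally show "\<bar>h $ j * pdx j f z\<bar> \<le> norm h * D" .
        qed
        also have "\<dots> = 3 * D * norm h" by simp
        finally show "norm (frechet_derivative f (at z) h) \<le> 3 * D * norm h" by simp
      qed
    qed (use x y in auto)
    moreover have "norm (x - y) \<le> 3"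
    proof -
      have "norm (x - y) \<le> (\<Sum>j\<in>UNIV. \<bar>(x - y) $ j\<bar>)" by (rule norm_le_l1_cart)
      also have "\<dots> \<le> (\<Sum>j\<in>(UNIV::3 set). 1)"
      proof (rule sum_mono)
        fix j :: 3
        have "0 \<le> x $ j" "x $ j \<le> 1" "0 \<le> y $ j" "y $ j \<le> 1"
          using x y by (auto simp: cell_mem)
        then show "\<bar>(x - y) $ j\<bar> \<le> 1" by simp
      qed
      finally show ?thesis by simp
    qed
    moreover have "3 * D * norm (x - y) \<le> 3 * D * 3"
      by (rule mult_left_mono) (use D0 \<open>norm (x - y) \<le> 3\<close> in auto)
    ultimately have "norm (f x - f y) \<le> 3 * D * 3"
      by linarith
    then show ?thesis by simp
  qed
  have intf: "f integrable_on torus_cell"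
    unfolding torus_cell_def by (rule integrable_continuous[OF continuous_on_subset[OF cont]]) auto
  have "integral torus_cell (\<lambda>y. f x - f y) = integral torus_cell (\<lambda>y. f x) - integral torus_cell f"
    by (rule integral_diff) (use intf in \<open>auto simp: torus_cell_def\<close>)
  moreover have "integral torus_cell (\<lambda>y. f x) = f x" by (simp add: torus_cell_def)
  ultimately have eqv: "f x - integral torus_cell f = integral torus_cell (\<lambda>y. f x - f y)"
    by simp
  have l2: "f x - f y \<le> 9*D \<and> -(9*D) \<le> f x - f y" if "y \<in> cbox 0 One" for y
    using lip[of y] that by (auto simp: abs_le_iff torus_cell_def)
  moreover have "integral torus_cell (\<lambda>y. f x - f y) \<le> integral torus_cell (\<lambda>y. 9 * D)"
    by (rule integral_le) (use l2 intf integrable_const[of "f x"] in \<open>auto simp: torus_cell_def intro!: integrable_diff\<close>)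
  moreover have "integral torus_cell (\<lambda>y. - (9 * D)) \<le> integral torus_cell (\<lambda>y. f x - f y)"
    by (rule integral_le) (use l2 intf integrable_const[of "f x"] in \<open>auto simp: torus_cell_def intro!: integrable_diff\<close>)
  ultimately show ?thesis using eqv by (simp add: torus_cell_def)
qed



lemma poly_add:
  assumes "poly_deg_ge2 n p" "poly_deg_ge2 n q"
  shows "poly_deg_ge2 n (\<lambda>y. p y + q y)"
proof -
  obtain M1 c1 where 1: "finite M1" "\<forall>m\<in>M1. (\<forall>k\<ge>n. m k = 0) \<and> 2 \<le> (\<Sum>k<n. m k)"
    "\<forall>y. p y = (\<Sum>m\<in>M1. c1 m * (\<Prod>k<n. y k ^ m k))"
    using assms(1) unfolding poly_deg_ge2_def by blast
  obtain M2 c2 where 2: "finite M2" "\<forall>m\<in>M2. (\<forall>k\<ge>n. m k = 0) \<and> 2 \<le> (\<Sum>k<n. m k)"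
    "\<forall>y. q y = (\<Sum>m\<in>M2. c2 m * (\<Prod>k<n. y k ^ m k))"
    using assms(2) unfolding poly_deg_ge2_def by blast
  define c where "c m = (if m \<in> M1 then c1 m else 0) + (if m \<in> M2 then c2 m else 0)" for m
  have "p y + q y = (\<Sum>m\<in>M1 \<union> M2. c m * (\<Prod>k<n. y k ^ m k))" for y
  proof -
    have "(\<Sum>m\<in>M1 \<union> M2. c m * (\<Prod>k<n. y k ^ m k)) =
      (\<Sum>m\<in>M1 \<union> M2. (if m \<in> M1 then c1 m * (\<Prod>k<n. y k ^ m k) else 0)) +
      (\<Sum>m\<in>M1 \<union> M2. (if m \<in> M2 then c2 m * (\<Prod>k<n. y k ^ m k) else 0))"
      unfolding sum.distrib[symmetric] by (rule sum.cong) (auto simp: c_def algebra_simps)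
    also have "\<dots> = (\<Sum>m\<in>M1. c1 m * (\<Prod>k<n. y k ^ m k)) + (\<Sum>m\<in>M2. c2 m * (\<Prod>k<n. y k ^ m k))"
      using 1(1) 2(1) by (intro arg_cong2[where f="(+)"] sum.mono_neutral_cong_right) auto
    finally show ?thesis using 1(3) 2(3) by simp
  qed
  then show ?thesis unfolding poly_deg_ge2_def
    using 1 2 by (intro exI[of _ "M1 \<union> M2"] exI[of _ c]) auto
qed

lemma poly_mono:
  assumes "\<forall>k\<ge>n. m k = 0" "2 \<le> (\<Sum>k<n. m k)"
  shows "poly_deg_ge2 n (\<lambda>y. c * (\<Prod>k<n. y k ^ m k))"
  unfolding poly_deg_ge2_def using assms
  by (intro exI[of _ "{m}"] exI[of _ "\<lambda>_. c"]) auto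

lemma poly_sq:
  assumes "a < n"
  shows "poly_deg_ge2 n (\<lambda>y. c * (y a)^2)"
proof -
  define m where "m k = (if k = a then 2 else (0::nat))" for k
  have "(\<Prod>k<n. y k ^ m k) = (\<Prod>k<n. if k = a then y k ^ 2 else 1)" for y :: "nat \<Rightarrow> real"
    by (rule prod.cong) (auto simp: m_def)
  also have "\<dots> y = (y a)^2" for y using assms by (simp add: prod.delta)
  finally have e: "(\<lambda>y. c * (y a)^2) = (\<lambda>y. c * (\<Prod>k<n. y k ^ m k))" by simp
  have "(\<Sum>k<n. m k) = 2" using assms by (simp add: m_def sum.delta)
  then show ?thesis unfolding e using assms by (intro poly_mono) (auto simp: m_def)
qed

lemma poly_sq2:
  assumes "a < n" "b < n"
  shows "poly_deg_ge2 n (\<lambda>y. c * ((y a)^2 * (y b)^2))"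
proof -
  define m where "m k = (if k = a then 2 else (0::nat)) + (if k = b then 2 else 0)" for k
  have "(\<Prod>k<n. y k ^ m k) = (\<Prod>k<n. (if k = a then y k ^ 2 else 1) * (if k = b then y k ^ 2 else 1))" for y :: "nat \<Rightarrow> real"
    by (rule prod.cong) (auto simp: m_def power_add)
  also have "\<dots> y = (y a)^2 * (y b)^2" for y using assms by (simp add: prod.distrib prod.delta)
  finally have e: "(\<lambda>y. c * ((y a)^2 * (y b)^2)) = (\<lambda>y. c * (\<Prod>k<n. y k ^ m k))" by simp
  have "(\<Sum>k<n. m k) = 4" using assms by (simp add: m_def sum.distrib sum.delta)
  then show ?thesis unfolding e using assms by (intro poly_mono) (auto simp: m_def)
qed

definition Pp :: "real \<Rightarrow> (nat \<Rightarrow> real) \<Rightarrow> real" where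
  "Pp a y = (6 + 2*a) * (2*((y 0)^2 + (y 1)^2 + (y 2)^2) + 486*(y 4)^2)
     + 2 * (2*((y 0)^2 + (y 1)^2 + (y 2)^2) + 486*(y 4)^2) * (y 5)^2 + 3 * (y 4)^2"

lemma Pp_poly: "poly_deg_ge2 6 (Pp a)"
proof -
  have "poly_deg_ge2 6 (\<lambda>y.
     ((2*(6+2*a)) * (y 0)^2 + (2*(6+2*a)) * (y 1)^2) + ((2*(6+2*a)) * (y 2)^2 + (486*(6+2*a)+3) * (y 4)^2)
   + ((4 * ((y 0)^2 * (y 5)^2) + 4 * ((y 1)^2 * (y 5)^2)) + (4 * ((y 2)^2 * (y 5)^2) + 972 * ((y 4)^2 * (y 5)^2))))"
    by (intro poly_add poly_sq poly_sq2) auto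
  moreover have "(\<lambda>y.
     ((2*(6+2*a)) * (y 0)^2 + (2*(6+2*a)) * (y 1)^2) + ((2*(6+2*a)) * (y 2)^2 + (486*(6+2*a)+3) * (y 4)^2)
   + ((4 * ((y 0)^2 * (y 5)^2) + 4 * ((y 1)^2 * (y 5)^2)) + (4 * ((y 2)^2 * (y 5)^2) + 972 * ((y 4)^2 * (y 5)^2)))) = Pp a"
    by (rule ext) (simp add: Pp_def algebra_simps)
  ultimately show ?thesis by simp
qed



lemma abs_mult_half: "\<bar>x * y\<bar> \<le> (x^2 + y^2) / 2" for x y :: real
proof -
  have "2 * \<bar>x\<bar> * \<bar>y\<bar> \<le> \<bar>x\<bar>^2 + \<bar>y\<bar>^2" by (rule sum_squares_bound)
  then show ?thesis by (simp add: abs_mult)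
qed

lemma abs_le_half: "\<bar>x\<bar> \<le> (1 + x^2) / 2" for x :: real
  using abs_mult_half[of 1 x] by simp

lemma pointwise:
  fixes u l :: "3 \<Rightarrow> real" and A :: "3 \<Rightarrow> 3 \<Rightarrow> real"
  assumes K: "0 \<le> K" "K \<le> 1/3"
    and n2: "n2 = (\<Sum>j\<in>UNIV. (u j)^2)" "n2 \<le> 1/100" "n2 \<le> R"
    and A: "\<And>i j. \<bar>A i j\<bar> \<le> D"
    and s: "0 \<le> s" "s \<le> W" and tau: "0 \<le> \<tau>" "\<tau> \<le> W" and a: "0 \<le> a"
    and Q: "Q = (1 - K) / (1 - K * n2)"
  shows "\<bar>K / (1 + K) * s * n2 * l i - s * (\<Sum>j\<in>UNIV. u j * A i j)
          + s * (1 - Q) * u i * (\<Sum>j\<in>UNIV. A j j)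
          + s * ((1 - K) / (1 + K)) * (1 - Q) * u i * (\<Sum>j\<in>UNIV. u j * l j)
          + a * \<tau> * Q * n2 * u i\<bar>
        \<le> W * ((6 + 2*a) * R + 2 * R * (\<Sum>j\<in>UNIV. (l j)^2) + 3 * D^2)"
proof -
  define L2 where "L2 = (\<Sum>j\<in>UNIV. (l j)^2)"
  have uj: "(u j)^2 \<le> n2" for j
    unfolding n2(1) by (rule member_le_sum) auto
  have n20: "0 \<le> n2" unfolding n2(1) by (simp add: sum_nonneg)
  have R0: "0 \<le> R" using n20 n2 by argo
  have lj: "(l j)^2 \<le> L2" for j
    unfolding L2_def by (rule member_le_sum) auto
  have L20: "0 \<le> L2" unfolding L2_def by (simp add: sum_nonneg)
  have D0: "0 \<le> D" using A[of 1 1] by argo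
  have A2: "(A i j)^2 \<le> D^2" for i j
    using A[of i j] by (metis abs_le_square_iff abs_of_nonneg D0)
  have ui: "\<bar>u j\<bar> \<le> 1" for j
  proof -
    have "(u j)^2 \<le> 1^2" using uj[of j] n2(2) by simp
    then show ?thesis using abs_square_le_1[of "u j"] by simp
  qed
  have kn0: "K * n2 \<le> 1/3 * (1/100)" using K n2(2) n20 by (intro mult_mono) auto
  then have kn: "K * n2 \<le> 1/300" by simp
  have den: "0 < 1 - K * n2" using kn by argo
  have Q0: "0 \<le> Q" unfolding Q using K den by simp
  have Q2: "Q \<le> 2"
  proof -
    have "1 - K \<le> 2 * (1 - K * n2)" using K kn by (simp add: algebra_simps)
    then show ?thesis unfolding Q using den by (simp add: divide_le_eq)
  qed
  have Q1: "\<bar>1 - Q\<bar> \<le> 1"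
  proof -
    have "1 - Q = K * (1 - n2) / (1 - K * n2)" unfolding Q using den
      by (simp add: field_simps)
    moreover have "0 \<le> K * (1 - n2)" using K n2 by simp
    moreover have "K * (1 - n2) \<le> 1 - K * n2" using K by (simp add: algebra_simps)
    ultimately show ?thesis using den by (simp add: abs_div_pos divide_le_eq_1)
  qed
  have kap: "\<bar>K / (1 + K)\<bar> \<le> 1" using K by simp
  have kap2: "\<bar>(1 - K) / (1 + K)\<bar> \<le> 1" using K by simp
  have t1: "\<bar>K / (1 + K) * s * n2 * l i\<bar> \<le> s * ((R + R * L2) / 2)"
  proof -
    have "\<bar>K / (1 + K) * s * n2 * l i\<bar> = \<bar>K / (1 + K)\<bar> * (s * (n2 * \<bar>l i\<bar>))"
      using s n20 by (simp add: abs_mult)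
    also have "\<dots> \<le> 1 * (s * (n2 * \<bar>l i\<bar>))"
      using kap s n20 by (intro mult_right_mono) auto
    also have "n2 * \<bar>l i\<bar> \<le> R * ((1 + L2) / 2)"
      using abs_le_half[of "l i"] lj[of i] n2(3) n20 L20 by (intro mult_mono) auto
    then have "s * (n2 * \<bar>l i\<bar>) \<le> s * (R * ((1 + L2) / 2))"
      using s by (intro mult_left_mono) auto
    finally show ?thesis by (simp add: algebra_simps)
  qed
  have t2: "\<bar>s * (\<Sum>j\<in>UNIV. u j * A i j)\<bar> \<le> s * (3 * ((R + D^2) / 2))"
  proof -
    have "\<bar>\<Sum>j\<in>UNIV. u j * A i j\<bar> \<le> (\<Sum>j\<in>UNIV. \<bar>u j * A i j\<bar>)" by (rule sum_abs)
    also have "\<dots> \<le> (\<Sum>j\<in>(UNIV::3 set). (R + D^2) / 2)"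
    proof (rule sum_mono)
      fix j :: 3
      show "\<bar>u j * A i j\<bar> \<le> (R + D^2) / 2"
        using abs_mult_half[of "u j" "A i j"] uj[of j] A2[of i j] n2(3) by argo
    qed
    finally have "\<bar>\<Sum>j\<in>UNIV. u j * A i j\<bar> \<le> 3 * ((R + D^2) / 2)" by simp
    then have "s * \<bar>\<Sum>j\<in>UNIV. u j * A i j\<bar> \<le> s * (3 * ((R + D^2) / 2))"
      using s by (intro mult_left_mono) auto
    then show ?thesis using s by (simp add: abs_mult)
  qed
  have t3: "\<bar>s * (1 - Q) * u i * (\<Sum>j\<in>UNIV. A j j)\<bar> \<le> s * (3 * ((R + D^2) / 2))"
  proof -
    have "\<bar>u i * (\<Sum>j\<in>UNIV. A j j)\<bar> = \<bar>\<Sum>j\<in>UNIV. u i * A j j\<bar>" by (simp add: sum_distrib_left)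
    also have "\<dots> \<le> (\<Sum>j\<in>UNIV. \<bar>u i * A j j\<bar>)" by (rule sum_abs)
    also have "\<dots> \<le> (\<Sum>j\<in>(UNIV::3 set). (R + D^2) / 2)"
    proof (rule sum_mono)
      fix j :: 3
      show "\<bar>u i * A j j\<bar> \<le> (R + D^2) / 2"
        using abs_mult_half[of "u i" "A j j"] uj[of i] A2[of j j] n2(3) by argo
    qed
    finally have x: "\<bar>u i * (\<Sum>j\<in>UNIV. A j j)\<bar> \<le> 3 * ((R + D^2) / 2)" by simp
    have "\<bar>s * (1 - Q) * u i * (\<Sum>j\<in>UNIV. A j j)\<bar> = s * (\<bar>1 - Q\<bar> * \<bar>u i * (\<Sum>j\<in>UNIV. A j j)\<bar>)"
      using s by (simp add: abs_mult)
    also have "\<dots> \<le> s * (1 * (3 * ((R + D^2) / 2)))"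
      using s Q1 x by (intro mult_left_mono mult_mono) auto
    finally show ?thesis by simp
  qed
  have t4: "\<bar>s * ((1 - K) / (1 + K)) * (1 - Q) * u i * (\<Sum>j\<in>UNIV. u j * l j)\<bar> \<le> s * ((3 * R + 3 * R * L2) / 2)"
  proof -
    have "\<bar>u i * (\<Sum>j\<in>UNIV. u j * l j)\<bar> = \<bar>\<Sum>j\<in>UNIV. (u i * u j) * l j\<bar>"
      by (simp add: sum_distrib_left mult.assoc)
    also have "\<dots> \<le> (\<Sum>j\<in>UNIV. \<bar>(u i * u j) * l j\<bar>)" by (rule sum_abs)
    also have "\<dots> \<le> (\<Sum>j\<in>(UNIV::3 set). R * ((1 + L2) / 2))"
    proof (rule sum_mono)
      fix j :: 3
      have "\<bar>u i * u j\<bar> \<le> R" using abs_mult_half[of "u i" "u j"] uj[of i] uj[of j] n2(3) by argo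
      then show "\<bar>(u i * u j) * l j\<bar> \<le> R * ((1 + L2) / 2)"
        unfolding abs_mult using abs_le_half[of "l j"] lj[of j] L20 R0 by (intro mult_mono) auto
    qed
    finally have x: "\<bar>u i * (\<Sum>j\<in>UNIV. u j * l j)\<bar> \<le> 3 * (R * ((1 + L2) / 2))" by simp
    have "\<bar>s * ((1 - K) / (1 + K)) * (1 - Q) * u i * (\<Sum>j\<in>UNIV. u j * l j)\<bar>
        = s * (\<bar>(1 - K) / (1 + K)\<bar> * (\<bar>1 - Q\<bar> * \<bar>u i * (\<Sum>j\<in>UNIV. u j * l j)\<bar>))"
      using s by (simp add: abs_mult)
    also have "\<dots> \<le> s * (1 * (1 * (3 * (R * ((1 + L2) / 2)))))"
      using s Q1 x kap2 by (intro mult_left_mono mult_mono) auto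
    finally show ?thesis by (simp add: algebra_simps)
  qed
  have t5: "\<bar>a * \<tau> * Q * n2 * u i\<bar> \<le> \<tau> * (2 * a * R)"
  proof -
    have "\<bar>a * \<tau> * Q * n2 * u i\<bar> = \<tau> * (a * (Q * (n2 * \<bar>u i\<bar>)))"
      using a tau Q0 n20 by (simp add: abs_mult)
    also have "\<dots> \<le> \<tau> * (a * (2 * (R * 1)))"
      using a tau Q0 Q2 n20 n2(3) ui[of i] by (intro mult_left_mono mult_mono) auto
    finally show ?thesis by simp
  qed
  have B0: "0 \<le> (6 + 2*a) * R + 2 * R * L2 + 3 * D^2" using a R0 L20 by simp
  have "s * ((R + R * L2) / 2) + s * (3 * ((R + D^2) / 2)) + s * (3 * ((R + D^2) / 2))
      + s * ((3 * R + 3 * R * L2) / 2) + \<tau> * (2 * a * R)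
      = s * (5 * R + 2 * R * L2 + 3 * D^2) + \<tau> * (2 * a * R)" by (simp add: field_simps)
  also have "\<dots> \<le> W * (5 * R + 2 * R * L2 + 3 * D^2) + W * (2 * a * R)"
    using s tau R0 L20 a by (intro add_mono mult_right_mono) auto
  also have "\<dots> \<le> W * ((6 + 2*a) * R + 2 * R * L2 + 3 * D^2)"
  proof -
    have "0 \<le> W" using s by argo
    moreover have "5 * R + 2 * R * L2 + 3 * D^2 + 2 * a * R \<le> (6 + 2*a) * R + 2 * R * L2 + 3 * D^2"
      using R0 L20 by (simp add: algebra_simps)
    ultimately show ?thesis by (metis distrib_left mult_left_mono)
  qed
  finally have tot: "s * ((R + R * L2) / 2) + s * (3 * ((R + D^2) / 2)) + s * (3 * ((R + D^2) / 2))
      + s * ((3 * R + 3 * R * L2) / 2) + \<tau> * (2 * a * R) \<le> W * ((6 + 2*a) * R + 2 * R * L2 + 3 * D^2)" .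
  show ?thesis unfolding L2_def[symmetric]
    using t1 t2 t3 t4 t5 tot by argo
qed



lemma v_facts:
  fixes v :: "real \<Rightarrow> real^3 \<Rightarrow> real^3"
  assumes ck: "\<forall>i. Ck_on 2 ({t0<..<t1} \<times> UNIV) (\<lambda>p. v (fst p) (snd p) $ i)"
    and t: "t \<in> {t0<..<t1}"
  shows "continuous_on UNIV (\<lambda>x. v t x $ i)"
    and "((\<lambda>y. v t y $ i) has_derivative frechet_derivative (\<lambda>y. v t y $ i) (at x)) (at x)"
    and "continuous_on UNIV (pdx j (\<lambda>y. v t y $ i))"
proof -
  note sf = slice_facts[OF ck[rule_format, of i] _ t, simplified]
  show "continuous_on UNIV (\<lambda>x. v t x $ i)" using sf(1) by simp
  show "((\<lambda>y. v t y $ i) has_derivative frechet_derivative (\<lambda>y. v t y $ i) (at x)) (at x)"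
    using sf(2)[of x] frechet_derivative_works differentiableI by blast
  show "continuous_on UNIV (pdx j (\<lambda>y. v t y $ i))" using sf(4)[of j] by simp
qed

lemma L_facts:
  fixes L :: "real \<Rightarrow> real^3 \<Rightarrow> real"
  assumes ck: "Ck_on 2 ({t0<..<t1} \<times> UNIV) (\<lambda>p. L (fst p) (snd p))"
    and t: "t \<in> {t0<..<t1}"
  shows "continuous_on UNIV (L t)"
    and "(L t has_derivative frechet_derivative (L t) (at x)) (at x)"
    and "continuous_on UNIV (pdx j (L t))"
proof -
  note sf = slice_facts[OF ck _ t, simplified]
  show "continuous_on UNIV (L t)" using sf(1) by simp
  show "(L t has_derivative frechet_derivative (L t) (at x)) (at x)"
    using sf(2)[of x] frechet_derivative_works differentiableI by (metis (no_types) eta_contract_eq)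
  show "continuous_on UNIV (pdx j (L t))" using sf(4)[of j] by simp
qed

lemma time_facts:
  fixes v :: "real \<Rightarrow> real^3 \<Rightarrow> real^3"
  assumes ck: "\<forall>i. Ck_on 2 ({t0<..<t1} \<times> UNIV) (\<lambda>p. v (fst p) (snd p) $ i)"
  defines "H \<equiv> \<lambda>i s x. frechet_derivative (\<lambda>p. v (fst p) (snd p) $ i) (at (s,x)) (1,0)"
  shows "\<And>s x. s \<in> {t0<..<t1} \<Longrightarrow> ((\<lambda>s. v s x $ i) has_field_derivative H i s x) (at s)"
    and "continuous_on ({t0<..<t1} \<times> UNIV) (\<lambda>(s,x). H i s x)"
proof -
  have t: "(t0+t1)/2 \<in> {t0<..<t1}" if "s \<in> {t0<..<t1}" for s using that by auto
  show "((\<lambda>s. v s x $ i) has_field_derivative H i s x) (at s)" if s: "s \<in> {t0<..<t1}" for s x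
    using slice_facts(5)[OF ck[rule_format, of i] _ s s] by (simp add: H_def)
  show "continuous_on ({t0<..<t1} \<times> UNIV) (\<lambda>(s,x). H i s x)"
  proof (cases "t0 < t1")
    case True
    then have "(t0+t1)/2 \<in> {t0<..<t1}" by auto
    from slice_facts(6)[OF ck[rule_format, of i] _ this] show ?thesis
      by (simp add: H_def split_beta)
  qed auto
qed

lemma slice_cont_gen:
  assumes "continuous_on (U \<times> UNIV) (\<lambda>(s,x). G s x)" "t \<in> U"
  shows "continuous_on UNIV (G t)"
proof -
  have "continuous_on UNIV ((\<lambda>(s,x). G s x) \<circ> (\<lambda>x. (t,x)))"
  proof (rule continuous_on_compose)
    show "continuous_on UNIV (\<lambda>x. (t, x))" by (auto intro!: continuous_intros)
    show "continuous_on ((\<lambda>x. (t, x)) ` UNIV) (\<lambda>(s, x). G s x)"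
      by (rule continuous_on_subset[OF assms(1)]) (use assms(2) in auto)
  qed
  then show ?thesis by (simp add: o_def)
qed

lemma cell_cbox: "torus_cell = cbox 0 One" by (simp add: torus_cell_def)

lemma main_est:
  fixes v :: "real \<Rightarrow> real^3 \<Rightarrow> real^3" and L :: "real \<Rightarrow> real^3 \<Rightarrow> real"
  assumes "\<alpha> > 0" and K: "0 \<le> K" "K \<le> 1/3" and t0: "1 \<le> t0"
    and sol: "euler_solution \<alpha> K t0 t1 v L" and t: "t \<in> {t0<..<t1}"
  shows "(\<lambda>s. mean3 (v s)) differentiable (at t) \<and>
         norm (vector_derivative (\<lambda>s. mean3 (v s)) (at t)
               + (\<alpha> * (1 - 3*K) / t) *\<^sub>R mean3 (v t))
           \<le> 3 * (1 + t powr (1 - \<alpha>)) / t *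
              Pp (\<alpha> * (1 - 3*K)) (\<lambda>k. [mean3 (v t) $ 1, mean3 (v t) $ 2, mean3 (v t) $ 3,
                       Dv_H1 (v t), Dv_Linf (v t), DL_L2 (L t)] ! k)"
proof -
  define U where "U = {t0<..<t1}"
  have U: "open U" "convex U" "t \<in> U" using t by (auto simp: U_def)
  have ckv: "\<forall>i. Ck_on 2 ({t0<..<t1} \<times> UNIV) (\<lambda>p. v (fst p) (snd p) $ i)"
    and ckL: "Ck_on 2 ({t0<..<t1} \<times> UNIV) (\<lambda>p. L (fst p) (snd p))"
    and per: "\<forall>s\<in>{t0<..<t1}. periodic3 (v s) \<and> periodic3 (L s)"
    and small: "\<forall>s\<in>{t0<..<t1}. \<forall>x. norm (v s x) < 1/10"
    and dv: "\<forall>s\<in>{t0<..<t1}. \<forall>x. \<forall>i. vector_derivative (\<lambda>s. v s x $ i) (at s) = euler_rhs_v \<alpha> K s (v s) (L s) x i"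
    using sol unfolding euler_solution_def by blast+
  define H where "H \<equiv> \<lambda>i s x. frechet_derivative (\<lambda>p. v (fst p) (snd p) $ i) (at (s,x)) (1,0)"
  have tf1: "((\<lambda>s. v s x $ i) has_field_derivative H i s x) (at s)" if "s \<in> {t0<..<t1}" for s x i
    using time_facts(1)[OF ckv that] by (simp add: H_def)
  have tf2: "continuous_on ({t0<..<t1} \<times> UNIV) (\<lambda>(s,x). H i s x)" for i
    using time_facts(2)[OF ckv] by (simp add: H_def)
  note vf = v_facts[OF ckv]
  note Lf = L_facts[OF ckL t]
  have vint: "(\<lambda>x. v s x $ i) integrable_on cbox 0 One" if "s \<in> U" for s i
    by (rule integrable_continuous, rule continuous_on_subset[OF vf(1)]) (use that in \<open>auto simp: U_def\<close>)
  have vvint: "v s integrable_on cbox 0 One" if "s \<in> U" for s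
  proof -
    have "continuous_on UNIV (\<lambda>x. \<chi> i. v s x $ i)"
      using vf(1) that by (intro continuous_on_vec_lambda) (auto simp: U_def)
    then show ?thesis by (intro integrable_continuous) (auto intro: continuous_on_subset)
  qed
  have meq: "mean3 (v s) $ i = integral (cbox 0 One) (\<lambda>x. v s x $ i)" if "s \<in> U" for s i
    using integral_component_eq_cart[OF vvint[OF that]] by (simp add: mean3_def torus_cell_def)
  have Hc: "continuous_on UNIV (H i t)" for i
    by (rule slice_cont_gen[OF tf2 U(3)[unfolded U_def]])
  define Vd where "Vd = (\<chi> i. integral (cbox 0 One) (H i t))"
  have mderi: "((\<lambda>s. mean3 (v s) $ i) has_field_derivative Vd $ i) (at t)" for i
  proof -
    have "((\<lambda>s. integral (cbox 0 One) (\<lambda>x. v s x $ i)) has_field_derivative integral (cbox 0 One) (H i t)) (at t within U)"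
    proof (rule leibniz_rule_field_derivative[where fx = "H i"])
      show "((\<lambda>s. v s x $ i) has_field_derivative H i s x) (at s within U)" if "s \<in> U" for s x
        using tf1[of s x] that by (auto simp: U_def intro: has_field_derivative_at_within)
      show "continuous_on (U \<times> cbox 0 One) (\<lambda>(s, x). H i s x)"
        using tf2[of i] by (rule continuous_on_subset) (auto simp: U_def)
    qed (use U vint in auto)
    then have "((\<lambda>s. integral (cbox 0 One) (\<lambda>x. v s x $ i)) has_field_derivative Vd $ i) (at t)"
      using at_within_open[OF U(3) U(1)] by (simp add: Vd_def)
    then show ?thesis
      by (rule has_field_derivative_transform_within_open[OF _ U(1) U(3)]) (simp add: meq)
  qed
  have mder: "((\<lambda>s. mean3 (v s)) has_derivative (\<lambda>h. h *\<^sub>R Vd)) (at t)"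
  proof (rule has_derivative_componentwise_within[THEN iffD2], intro ballI)
    fix b :: "real^3" assume "b \<in> Basis"
    then obtain i where b: "b = axis i 1" unfolding Basis_vec_def by auto
    have "((\<lambda>s. mean3 (v s) $ i) has_derivative (\<lambda>h. h * Vd $ i)) (at t)"
    proof -
      have e: "(\<lambda>h. h * Vd $ i) = (*) (Vd $ i)" by (rule ext) (simp add: mult.commute)
      show ?thesis using mderi[of i] unfolding has_field_derivative_def e .
    qed
    then show "((\<lambda>s. mean3 (v s) \<bullet> b) has_derivative (\<lambda>h. (h *\<^sub>R Vd) \<bullet> b)) (at t)"
      unfolding b inner_axis by simp
  qed
  have diff: "(\<lambda>s. mean3 (v s)) differentiable (at t)"
    using mder by (rule differentiableI)
  have vd: "vector_derivative (\<lambda>s. mean3 (v s)) (at t) = Vd"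
    using mder by (intro vector_derivative_at) (simp add: has_vector_derivative_def)
  define m where "m = mean3 (v t)"
  define D where "D = Dv_Linf (v t)"
  define s where "s = t powr (-\<alpha>)"
  define a where "a = \<alpha> * (1 - 3*K)"
  define W where "W = (1 + t powr (1 - \<alpha>)) / t"
  define R where "R = 2*((m$1)^2 + (m$2)^2 + (m$3)^2) + 486*D^2"
  define l where "l = L t"
  define E where "E i x = euler_rhs_v \<alpha> K t (v t) l x i + (a/t) * (v t x $ i) + K/(1+K) * s * pdx i l x" for i x
  define Gs where "Gs x = (\<Sum>j\<in>UNIV. (pdx j l x)^2)" for x
  have tpos: "0 < t" using t t0 by auto
  have a0: "0 \<le> a" using assms K by (simp add: a_def)
  have s0: "0 \<le> s" by (simp add: s_def)
  have Ws: "W = 1/t + s"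
  proof -
    have "t powr (1 - \<alpha>) = t powr (1 + (-\<alpha>))" by simp
    also have "\<dots> = t powr 1 * t powr (-\<alpha>)" by (rule powr_add)
    also have "\<dots> = t * s" using tpos by (simp add: s_def)
    finally show ?thesis using tpos by (simp add: W_def field_simps)
  qed
  have sW: "s \<le> W" and tauW: "1/t \<le> W" and tau0: "0 \<le> 1/t" using Ws s0 tpos by auto
  have tU: "t \<in> {t0<..<t1}" using t .
  have rhsH: "euler_rhs_v \<alpha> K t (v t) l x i = H i t x" for x i
  proof -
    have "vector_derivative (\<lambda>s. v s x $ i) (at t) = H i t x"
      by (rule vector_derivative_at) (use tf1[OF tU, of x i] in \<open>simp add: has_real_derivative_iff_has_vector_derivative\<close>)
    then show ?thesis using dv tU by (simp add: l_def)
  qed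
  have E_eq: "E i = (\<lambda>x. (H i t x + (a / t) * (v t x $ i)) + (K / (1 + K) * s) * pdx i l x)" for i
    by (rule ext) (simp add: E_def rhsH)
  have Hint: "H i t integrable_on cbox 0 One" for i
    by (rule integrable_continuous, rule continuous_on_subset[OF Hc]) auto
  have pint: "pdx i l integrable_on cbox 0 One" for i
    by (rule integrable_continuous, rule continuous_on_subset[OF Lf(3)[of i, folded l_def]]) auto
  have Eint: "E i integrable_on cbox 0 One" for i
    unfolding E_eq
    by (intro integrable_add integrable_on_mult_right Hint pint vint U(3))
  have perL: "periodic3 (L t)" using per tU by blast
  have pzero: "integral (cbox 0 One) (pdx i l) = 0" for i
    using mean_pdx_zero[OF Lf(1) Lf(2) Lf(3) perL] by (simp add: l_def cell_cbox)
  have intE: "(Vd + (a/t) *\<^sub>R m) $ i = integral (cbox 0 One) (E i)" for i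
  proof -
    have "integral (cbox 0 One) (E i) = (integral (cbox 0 One) (H i t) + (a/t) * integral (cbox 0 One) (\<lambda>x. v t x $ i))
        + (K / (1 + K) * s) * integral (cbox 0 One) (pdx i l)"
      unfolding E_eq
      apply (subst integral_add[OF integrable_add[OF Hint integrable_on_mult_right[OF vint[OF U(3)]]] integrable_on_mult_right[OF pint]])
      apply (subst integral_add[OF Hint integrable_on_mult_right[OF vint[OF U(3)]]])
      apply (simp only: Henstock_Kurzweil_Integration.integral_mult_right)
      done
    then show ?thesis using meq[OF U(3), of i] by (simp add: pzero Vd_def m_def)
  qed
  have Dsc: "continuous_on UNIV (Dv_sq (v t))"
    unfolding Dv_sq_def[abs_def] using vf(3)[OF tU] by (intro continuous_intros) auto
  have Dbdd: "bdd_above ((\<lambda>x. sqrt (Dv_sq (v t) x)) ` torus_cell)"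
  proof -
    have "compact ((\<lambda>x. sqrt (Dv_sq (v t) x)) ` torus_cell)"
      by (rule compact_continuous_image) (auto simp: cell_cbox intro!: continuous_intros continuous_on_subset[OF Dsc])
    then show ?thesis by (intro bounded_imp_bdd_above compact_imp_bounded)
  qed
  have Aij: "\<bar>pdx j (\<lambda>y. v t y $ i) x\<bar> \<le> D" if x: "x \<in> torus_cell" for i j x
  proof -
    have "(pdx j (\<lambda>y. v t y $ i) x)^2 \<le> (\<Sum>j\<in>UNIV. (pdx j (\<lambda>y. v t y $ i) x)^2)"
      by (rule member_le_sum) auto
    also have "\<dots> \<le> Dv_sq (v t) x" unfolding Dv_sq_def
      by (rule member_le_sum[of i UNIV "\<lambda>i. \<Sum>j\<in>UNIV. (pdx j (\<lambda>y. v t y $ i) x)^2"]) (auto intro: sum_nonneg)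
    finally have "sqrt ((pdx j (\<lambda>y. v t y $ i) x)^2) \<le> sqrt (Dv_sq (v t) x)" by (rule real_sqrt_le_mono)
    also have "\<dots> \<le> D" unfolding D_def Dv_Linf_def by (rule cSUP_upper[OF x Dbdd])
    finally show ?thesis by simp
  qed
  have D0: "0 \<le> D" using Aij[of 0 1 1] by (auto simp: cell_mem)
  have ptw: "\<bar>E i x\<bar> \<le> W * ((6 + 2*a) * R + 2 * R * Gs x + 3 * D^2)" if x: "x \<in> torus_cell" for i x
  proof -
    define n2 where "n2 = (norm (v t x))^2"
    define Q where "Q = (1 - K) / (1 - K * n2)"
    have n2eq: "n2 = (\<Sum>j\<in>UNIV. (v t x $ j)^2)"
      by (simp add: n2_def norm_vec_def L2_set_def sum_nonneg)
    have n2s: "n2 \<le> 1/100"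
    proof -
      have "norm (v t x) \<le> 1/10" using small tU by (simp add: less_imp_le)
      then have "(norm (v t x))^2 \<le> (1/10)^2" by (intro power_mono) auto
      then show ?thesis by (simp add: n2_def power2_eq_square)
    qed
    have uj: "(v t x $ j)^2 \<le> 2 * (m $ j)^2 + 162 * D^2" for j
    proof -
      have osc: "\<bar>v t x $ j - integral torus_cell (\<lambda>y. v t y $ j)\<bar> \<le> 9 * D"
        by (rule osc_bound[OF vf(2)[OF tU] Aij vf(1)[OF tU] x])
      then have o2: "\<bar>v t x $ j - m $ j\<bar> \<le> 9 * D"
        using meq[OF U(3), of j] by (simp add: m_def cell_cbox)
      have "(v t x $ j - m $ j)^2 \<le> (9 * D)^2"
        using o2 by (metis abs_le_square_iff abs_of_nonneg D0 mult_nonneg_nonneg zero_le_numeral)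
      moreover have "0 \<le> (v t x $ j - 2 * m $ j)^2" by simp
      ultimately show ?thesis by (simp add: power2_eq_square algebra_simps)
    qed
    have n2R: "n2 \<le> R"
    proof -
      have "n2 \<le> (\<Sum>j\<in>(UNIV::3 set). 2 * (m $ j)^2 + 162 * D^2)"
        unfolding n2eq by (rule sum_mono) (rule uj)
      also have "\<dots> = R" by (simp add: R_def sum_3 algebra_simps)
      finally show ?thesis .
    qed
    have Eexp: "E i x = K / (1 + K) * s * n2 * pdx i l x - s * (\<Sum>j\<in>UNIV. v t x $ j * pdx j (\<lambda>y. v t y $ i) x)
          + s * (1 - Q) * v t x $ i * (\<Sum>j\<in>UNIV. pdx j (\<lambda>y. v t y $ j) x)
          + s * ((1 - K) / (1 + K)) * (1 - Q) * v t x $ i * (\<Sum>j\<in>UNIV. v t x $ j * pdx j l x)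
          + a * (1/t) * Q * n2 * v t x $ i"
      unfolding E_def euler_rhs_v_def Let_def n2_def[symmetric] Q_def[symmetric] s_def[symmetric] a_def[symmetric]
      by (simp add: algebra_simps add_divide_distrib[symmetric])
    have "\<bar>E i x\<bar> \<le> W * ((6 + 2*a) * R + 2 * R * (\<Sum>j\<in>UNIV. (pdx j l x)^2) + 3 * D^2)"
      unfolding Eexp
      by (rule pointwise[where u = "\<lambda>j. v t x $ j" and l = "\<lambda>j. pdx j l x" and A = "\<lambda>i j. pdx j (\<lambda>y. v t y $ i) x",
            OF K n2eq n2s n2R Aij[OF x] s0 sW tau0 tauW a0 Q_def])
    then show ?thesis by (simp add: Gs_def)
  qed
  have Gsc: "continuous_on UNIV Gs"
    unfolding Gs_def[abs_def] l_def using Lf(3) by (intro continuous_intros) auto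
  have Gsint: "Gs integrable_on cbox 0 One"
    by (rule integrable_continuous, rule continuous_on_subset[OF Gsc]) auto
  have DL: "(DL_L2 l)^2 = integral (cbox 0 One) Gs"
  proof -
    have e: "(\<lambda>x. \<Sum>j\<in>UNIV. (pdx j l x)^2) = Gs" by (rule ext) (simp add: Gs_def)
    have "0 \<le> integral (cbox 0 One) Gs"
      by (rule integral_nonneg[OF Gsint]) (simp add: Gs_def sum_nonneg)
    then show ?thesis by (simp add: DL_L2_def e cell_cbox)
  qed
  have bnd: "\<bar>(Vd + (a/t) *\<^sub>R m) $ i\<bar> \<le> W * ((6 + 2*a) * R + 2 * R * (DL_L2 l)^2 + 3 * D^2)" for i
  proof -
    have eqW: "(\<lambda>x. W * ((6 + 2*a) * R + 2 * R * Gs x + 3 * D^2)) = (\<lambda>x. (W * ((6 + 2*a) * R + 3 * D^2)) + (W * (2 * R)) * Gs x)"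
        by (rule ext) (simp add: algebra_simps)
    have Wint: "(\<lambda>x. W * ((6 + 2*a) * R + 2 * R * Gs x + 3 * D^2)) integrable_on cbox 0 One"
      unfolding eqW by (rule integrable_add[OF integrable_const integrable_on_mult_right[OF Gsint]])
    have "norm (integral (cbox 0 One) (E i)) \<le> integral (cbox 0 One) (\<lambda>x. W * ((6 + 2*a) * R + 2 * R * Gs x + 3 * D^2))"
      by (rule integral_norm_bound_integral[OF Eint Wint]) (use ptw in \<open>simp add: cell_cbox\<close>)
    then have "\<bar>integral (cbox 0 One) (E i)\<bar> \<le> integral (cbox 0 One) (\<lambda>x. W * ((6 + 2*a) * R + 2 * R * Gs x + 3 * D^2))"
      by simp
    also have "\<dots> = W * ((6 + 2*a) * R + 2 * R * integral (cbox 0 One) Gs + 3 * D^2)"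
      unfolding eqW integral_add[OF integrable_const integrable_on_mult_right[OF Gsint]]
      by (simp add: algebra_simps)
    finally show ?thesis using intE DL by simp
  qed
  have Pval: "Pp a (\<lambda>k. [mean3 (v t) $ 1, mean3 (v t) $ 2, mean3 (v t) $ 3,
                       Dv_H1 (v t), Dv_Linf (v t), DL_L2 (L t)] ! k)
      = (6 + 2*a) * R + 2 * R * (DL_L2 l)^2 + 3 * D^2"
    by (simp add: Pp_def R_def m_def D_def l_def)
  have "norm (Vd + (a/t) *\<^sub>R m) \<le> (\<Sum>i\<in>UNIV. \<bar>(Vd + (a/t) *\<^sub>R m) $ i\<bar>)" by (rule norm_le_l1_cart)
  also have "\<dots> \<le> (\<Sum>i\<in>(UNIV::3 set). W * ((6 + 2*a) * R + 2 * R * (DL_L2 l)^2 + 3 * D^2))"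
    by (rule sum_mono) (rule bnd)
  also have "\<dots> = 3 * W * ((6 + 2*a) * R + 2 * R * (DL_L2 l)^2 + 3 * D^2)" by simp
  finally show ?thesis
    using diff vd Pval by (simp add: m_def a_def W_def)
qed


theorem lemma4p1:
  fixes \<alpha> K :: real
  assumes "\<alpha> > 0" and "0 \<le> K" and "K \<le> 1/3"
  shows "\<exists>C p. poly_deg_ge2 6 p \<and>
    (\<forall>t0 t1 v L. 1 \<le> t0 \<longrightarrow> t0 < t1 \<longrightarrow> euler_solution \<alpha> K t0 t1 v L \<longrightarrow>
      (\<forall>t\<in>{t0<..<t1}.
         (\<lambda>s. mean3 (v s)) differentiable (at t) \<and>
         norm (vector_derivative (\<lambda>s. mean3 (v s)) (at t)
               + (\<alpha> * (1 - 3*K) / t) *\<^sub>R mean3 (v t))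
           \<le> C * (1 + t powr (1 - \<alpha>)) / t *
              p (\<lambda>k. [mean3 (v t) $ 1, mean3 (v t) $ 2, mean3 (v t) $ 3,
                       Dv_H1 (v t), Dv_Linf (v t), DL_L2 (L t)] ! k)))"
  by (intro exI[of _ "3::real"] exI[of _ "Pp (\<alpha> * (1 - 3*K))"] conjI[OF Pp_poly] allI impI ballI,
      rule main_est[OF assms]) auto

end
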